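(* Let $X,Y$ be finite sets, let $A$ be an arbitrary $|X|\times|Y|$ matrix (possibly with complex entries) with rows indexed by $X$ and columns by $Y$, and let $\mathcal{R}$ be a rectangle partition of $X\times Y$. Then $$\|A\|_2^2\le\sum_{R\in\mathcal{R}}\|A_R\|_2^2.$$
   Context: A rectangle is a subset of $X\times Y$ of the form $X_0\times Y_0$ with $X_0\subseteq X$, $Y_0\subseteq Y$; a rectangle partition is a set of pairwise disjoint rectangles whose union is $X\times Y$. For a rectangle $R=X_0\times Y_0$, $A_R$ is the $|X_0|\times|Y_0|$ submatrix of $A$ with rows in $X_0$ and columns in $Y_0$. $\|\cdot\|_2$ denotes the spectral norm (largest singular value). *)

theory Defs
  imports "HOL-Analysis.Analysis"
begin

text \<open>A matrix with rows indexed by X and columns by Y is a function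
  A :: 'a \<Rightarrow> 'b \<Rightarrow> complex (only values on X \<times> Y matter).\<close>
definition vec_norm2 :: "'b set \<Rightarrow> ('b \<Rightarrow> complex) \<Rightarrow> real" where
  "vec_norm2 Y v = sqrt (\<Sum>y\<in>Y. (cmod (v y))^2)"

definition mat_vec :: "'a set \<Rightarrow> 'b set \<Rightarrow> ('a \<Rightarrow> 'b \<Rightarrow> complex) \<Rightarrow> ('b \<Rightarrow> complex) \<Rightarrow> ('a \<Rightarrow> complex)" where
  "mat_vec X Y A v = (\<lambda>x. \<Sum>y\<in>Y. A x y * v y)"

text \<open>Spectral norm (largest singular value) of the submatrix with rows X and
  columns Y, written as the l2 operator norm.\<close>
definition spec_norm :: "'a set \<Rightarrow> 'b set \<Rightarrow> ('a \<Rightarrow> 'b \<Rightarrow> complex) \<Rightarrow> real" where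
  "spec_norm X Y A = Sup {vec_norm2 X (mat_vec X Y A v) | v. vec_norm2 Y v \<le> 1}"

definition is_rectangle :: "'a set \<Rightarrow> 'b set \<Rightarrow> ('a \<times> 'b) set \<Rightarrow> bool" where
  "is_rectangle X Y R \<longleftrightarrow> (\<exists>X0 Y0. X0 \<subseteq> X \<and> Y0 \<subseteq> Y \<and> R = X0 \<times> Y0)"

definition rectangle_partition :: "'a set \<Rightarrow> 'b set \<Rightarrow> ('a \<times> 'b) set set \<Rightarrow> bool" where
  "rectangle_partition X Y P \<longleftrightarrow>
     (\<forall>R\<in>P. is_rectangle X Y R) \<and>
     (\<forall>R\<in>P. \<forall>S\<in>P. R \<noteq> S \<longrightarrow> R \<inter> S = {}) \<and>
     \<Union>P = X \<times> Y"

definition sub_spec_norm :: "('a \<times> 'b) set \<Rightarrow> ('a \<Rightarrow> 'b \<Rightarrow> complex) \<Rightarrow> real" where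
  "sub_spec_norm R A = spec_norm (fst ` R) (snd ` R) A"

end

theory Submission
  imports Defs
begin

lemma vn_L2: "vec_norm2 Y v = L2_set (\<lambda>y. cmod (v y)) Y"
  unfolding vec_norm2_def L2_set_def by simp

lemma spec_bdd:
  assumes "finite X" "finite Y"
  shows "bdd_above {vec_norm2 X (mat_vec X Y A v) | v. vec_norm2 Y v \<le> 1}"
proof (rule bdd_aboveI)
  fix r assume "r \<in> {vec_norm2 X (mat_vec X Y A v) | v. vec_norm2 Y v \<le> 1}"
  then obtain v where r: "r = vec_norm2 X (mat_vec X Y A v)" and v: "vec_norm2 Y v \<le> 1" by blast
  have vy: "cmod (v y) \<le> 1" if "y \<in> Y" for y
    using member_le_L2_set[OF assms(2) that, of "\<lambda>y. cmod (v y)"] v by (simp add: vn_L2)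
  have "r \<le> (\<Sum>x\<in>X. cmod (mat_vec X Y A v x))"
    unfolding r vn_L2 by (rule L2_set_le_sum) simp
  also have "\<dots> \<le> (\<Sum>x\<in>X. \<Sum>y\<in>Y. cmod (A x y))"
  proof (rule sum_mono)
    fix x assume "x \<in> X"
    have "cmod (mat_vec X Y A v x) \<le> (\<Sum>y\<in>Y. cmod (A x y * v y))"
      unfolding mat_vec_def by (rule norm_sum)
    also have "\<dots> \<le> (\<Sum>y\<in>Y. cmod (A x y))"
      by (rule sum_mono) (simp add: norm_mult mult_left_le vy)
    finally show "cmod (mat_vec X Y A v x) \<le> (\<Sum>y\<in>Y. cmod (A x y))" .
  qed
  finally show "r \<le> (\<Sum>x\<in>X. \<Sum>y\<in>Y. cmod (A x y))" .
qed

lemma spec_nonneg: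
  assumes "finite X" "finite Y"
  shows "0 \<le> spec_norm X Y A"
proof -
  have "vec_norm2 X (mat_vec X Y A (\<lambda>_. 0)) \<in> {vec_norm2 X (mat_vec X Y A v) | v. vec_norm2 Y v \<le> 1}"
    by (auto simp: vec_norm2_def)
  from cSup_upper[OF this spec_bdd[OF assms]] show ?thesis
    by (simp add: spec_norm_def vec_norm2_def mat_vec_def)
qed

lemma opbound:
  assumes "finite X" "finite Y"
  shows "vec_norm2 X (mat_vec X Y A w) \<le> spec_norm X Y A * vec_norm2 Y w"
proof (cases "vec_norm2 Y w = 0")
  case True
  then have "\<forall>y\<in>Y. w y = 0" using L2_set_eq_0_iff[OF assms(2)] by (simp add: vn_L2)
  then have "\<forall>x\<in>X. mat_vec X Y A w x = 0" by (simp add: mat_vec_def)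
  then show ?thesis using True by (simp add: vec_norm2_def)
next
  case False
  define n where "n = vec_norm2 Y w"
  have n0: "n > 0" using False unfolding n_def vn_L2 by (simp add: less_le)
  define w' where "w' = (\<lambda>y. w y / of_real n)"
  have "vec_norm2 Y w' = vec_norm2 Y w / n"
    unfolding vec_norm2_def w'_def using n0
    by (simp add: norm_divide power_divide sum_divide_distrib[symmetric] real_sqrt_divide)
  then have w'1: "vec_norm2 Y w' \<le> 1" using n0 by (simp add: n_def)
  have mv: "mat_vec X Y A w' = (\<lambda>x. mat_vec X Y A w x / of_real n)"
    unfolding mat_vec_def w'_def by (simp add: sum_divide_distrib)
  have "vec_norm2 X (mat_vec X Y A w') = vec_norm2 X (mat_vec X Y A w) / n"
    unfolding mv vec_norm2_def using n0
    by (simp add: norm_divide power_divide sum_divide_distrib[symmetric] real_sqrt_divide)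
  moreover have "vec_norm2 X (mat_vec X Y A w') \<le> spec_norm X Y A"
    unfolding spec_norm_def
    by (rule cSup_upper[OF _ spec_bdd[OF assms]]) (use w'1 in blast)
  ultimately have "vec_norm2 X (mat_vec X Y A w) / n \<le> spec_norm X Y A" by simp
  then show ?thesis using n0 by (simp add: n_def divide_le_eq mult.commute)
qed


lemma times_img: "fst ` (A \<times> B) \<times> snd ` (A \<times> B) = A \<times> B"
  by auto

theorem mainTheorem3:
  fixes X :: "'a set" and Y :: "'b set" and A :: "'a \<Rightarrow> 'b \<Rightarrow> complex"
    and P :: "('a \<times> 'b) set set"
  assumes "finite X" and "finite Y" and "rectangle_partition X Y P"
  shows "(spec_norm X Y A)^2 \<le> (\<Sum>R\<in>P. (sub_spec_norm R A)^2)"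
proof -
  note fX = assms(1) and fY = assms(2)
  have rectP: "\<And>R. R \<in> P \<Longrightarrow> is_rectangle X Y R"
    and disj: "\<And>R S. R \<in> P \<Longrightarrow> S \<in> P \<Longrightarrow> R \<noteq> S \<Longrightarrow> R \<inter> S = {}"
    and UP: "\<Union>P = X \<times> Y"
    using assms(3) unfolding rectangle_partition_def by blast+
  have finXY: "finite (X \<times> Y)" using fX fY by simp
  have finP: "finite P"
    by (rule finite_subset[of _ "Pow (X \<times> Y)"]) (use UP finXY in blast)+
  have finR: "\<And>R. R \<in> P \<Longrightarrow> finite R" using UP finXY
    by (metis Union_upper finite_subset)
  have rect: "R = fst ` R \<times> snd ` R" "fst ` R \<subseteq> X" "snd ` R \<subseteq> Y" if RP0: "R \<in> P" for R
  proof -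
    obtain X0 Y0 where "X0 \<subseteq> X" "Y0 \<subseteq> Y" "R = X0 \<times> Y0"
      using rectP[OF RP0] unfolding is_rectangle_def by blast
    then show "R = fst ` R \<times> snd ` R" "fst ` R \<subseteq> X" "snd ` R \<subseteq> Y"
      by (simp_all add: times_img)
  qed
  have rm: "(x, y) \<in> R \<longleftrightarrow> x \<in> fst ` R \<and> y \<in> snd ` R" if RP0: "R \<in> P" for R x y
  proof -
    obtain X0 Y0 where "X0 \<subseteq> X" "Y0 \<subseteq> Y" "R = X0 \<times> Y0"
      using rectP[OF RP0] unfolding is_rectangle_def by blast
    then show ?thesis by auto
  qed
  have finXR: "finite (fst ` R)" "finite (snd ` R)" if "R \<in> P" for R
    using finR[OF that] by auto
  define S where "S = (\<Sum>R\<in>P. (sub_spec_norm R A)^2)"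
  have S0: "0 \<le> S" unfolding S_def by (simp add: sum_nonneg)
  define N where "N = (\<lambda>R. sub_spec_norm R A)"
  have key: "vec_norm2 X (mat_vec X Y A v) \<le> sqrt S" if v1: "vec_norm2 Y v \<le> 1" for v
  proof -
    define u where "u = mat_vec X Y A v"
    define B :: "('a \<times> 'b) set \<Rightarrow> 'a \<Rightarrow> complex" where "B = (\<lambda>R. mat_vec (fst ` R) (snd ` R) A v)"
    define a :: "('a \<times> 'b) set \<Rightarrow> real" where "a = (\<lambda>R. L2_set (\<lambda>x. cmod (u x)) (fst ` R))"
    define b :: "('a \<times> 'b) set \<Rightarrow> real" where "b = (\<lambda>R. L2_set (\<lambda>y. cmod (v y)) (snd ` R))"
    define nu where "nu = vec_norm2 X u"
    define nv where "nv = vec_norm2 Y v"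
    have nu0: "0 \<le> nu" unfolding nu_def vn_L2 by simp
    have nv0: "0 \<le> nv" unfolding nv_def vn_L2 by simp
    have one: "(\<Sum>R\<in>P. if (x, y) \<in> R then c else 0) = c"
      if "x \<in> X" "y \<in> Y" for x y and c :: complex
    proof -
      have "(x, y) \<in> \<Union>P" using UP that by simp
      then obtain R0 where R0: "R0 \<in> P" "(x, y) \<in> R0" by (rule UnionE)
      have "(\<Sum>R\<in>P. if (x, y) \<in> R then c else 0) = (\<Sum>R\<in>P. if R0 = R then c else 0)"
      proof (rule sum.cong)
        fix R assume RP: "R \<in> P"
        have "(x, y) \<in> R \<longleftrightarrow> R0 = R"
        proof
          assume "(x, y) \<in> R"
          then have "R \<inter> R0 \<noteq> {}" using R0(2) by blast
          then show "R0 = R" using disj[OF RP R0(1)] by blast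
        qed (use R0(2) in simp)
        then show "(if (x, y) \<in> R then c else 0) = (if R0 = R then c else 0)" by simp
      qed simp
      also have "\<dots> = c" using R0 finP by simp
      finally show ?thesis .
    qed
    have decomp: "u x = (\<Sum>R\<in>P. if x \<in> fst ` R then B R x else 0)" if xX: "x \<in> X" for x
    proof -
      have "u x = (\<Sum>y\<in>Y. \<Sum>R\<in>P. if (x, y) \<in> R then A x y * v y else 0)"
        unfolding u_def mat_vec_def by (rule sum.cong) (use one xX in auto)
      also have "\<dots> = (\<Sum>R\<in>P. \<Sum>y\<in>Y. if (x, y) \<in> R then A x y * v y else 0)"
        by (rule sum.swap)
      also have "\<dots> = (\<Sum>R\<in>P. if x \<in> fst ` R then B R x else 0)"
      proof (rule sum.cong)
        fix R assume RP: "R \<in> P"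
        have "(\<Sum>y\<in>Y. if (x, y) \<in> R then A x y * v y else 0)
              = (\<Sum>y\<in>{y\<in>Y. (x, y) \<in> R}. A x y * v y)"
          by (rule sum.inter_filter[OF fY, symmetric])
        also have "{y\<in>Y. (x, y) \<in> R} = (if x \<in> fst ` R then snd ` R else {})"
          using rect(3)[OF RP] rm[OF RP, of x] by auto
        finally show "(\<Sum>y\<in>Y. if (x, y) \<in> R then A x y * v y else 0)
              = (if x \<in> fst ` R then B R x else 0)"
          by (simp add: B_def mat_vec_def)
      qed simp
      finally show ?thesis .
    qed
    have "nu^2 = (\<Sum>x\<in>X. cmod (u x) * cmod (u x))"
      unfolding nu_def vec_norm2_def by (simp add: power2_eq_square sum_nonneg)
    also have "\<dots> \<le> (\<Sum>x\<in>X. cmod (u x) * (\<Sum>R\<in>P. if x \<in> fst ` R then cmod (B R x) else 0))"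
    proof (rule sum_mono)
      fix x assume xX: "x \<in> X"
      have "cmod (u x) \<le> (\<Sum>R\<in>P. cmod (if x \<in> fst ` R then B R x else 0))"
        unfolding decomp[OF xX] by (rule norm_sum)
      also have "\<dots> = (\<Sum>R\<in>P. if x \<in> fst ` R then cmod (B R x) else 0)"
        by (rule sum.cong) auto
      finally show "cmod (u x) * cmod (u x) \<le> cmod (u x) * (\<Sum>R\<in>P. if x \<in> fst ` R then cmod (B R x) else 0)"
        by (rule mult_left_mono) simp
    qed
    also have "\<dots> = (\<Sum>R\<in>P. \<Sum>x\<in>X. if x \<in> fst ` R then cmod (u x) * cmod (B R x) else 0)"
      by (simp add: sum_distrib_left if_distrib cong: if_cong) (rule sum.swap)
    also have "\<dots> = (\<Sum>R\<in>P. \<Sum>x\<in>fst ` R. cmod (u x) * cmod (B R x))"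
    proof (rule sum.cong)
      fix R assume RP: "R \<in> P"
      have e: "{x\<in>X. x \<in> fst ` R} = fst ` R" using rect(2)[OF RP] by blast
      show "(\<Sum>x\<in>X. if x \<in> fst ` R then cmod (u x) * cmod (B R x) else 0)
          = (\<Sum>x\<in>fst ` R. cmod (u x) * cmod (B R x))"
        unfolding sum.inter_filter[OF fX, symmetric] e ..
    qed simp
    also have "\<dots> \<le> (\<Sum>R\<in>P. a R * L2_set (\<lambda>x. cmod (B R x)) (fst ` R))"
      unfolding a_def
      by (rule sum_mono) (use L2_set_mult_ineq[of "\<lambda>x. cmod (u x)" "\<lambda>x. cmod (B _ x)"] in simp)
    also have "\<dots> \<le> (\<Sum>R\<in>P. a R * (N R * b R))"
    proof (rule sum_mono)
      fix R assume RP: "R \<in> P"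
      have "L2_set (\<lambda>x. cmod (B R x)) (fst ` R) \<le> N R * b R"
        using opbound[OF finXR[OF RP], of A v]
        unfolding B_def N_def b_def sub_spec_norm_def vn_L2 .
      then show "a R * L2_set (\<lambda>x. cmod (B R x)) (fst ` R) \<le> a R * (N R * b R)"
        by (rule mult_left_mono) (simp add: a_def)
    qed
    also have "\<dots> = (\<Sum>R\<in>P. \<bar>N R\<bar> * \<bar>a R * b R\<bar>)"
    proof (rule sum.cong)
      fix R assume RP: "R \<in> P"
      have "0 \<le> N R" unfolding N_def sub_spec_norm_def by (rule spec_nonneg[OF finXR[OF RP]])
      then show "a R * (N R * b R) = \<bar>N R\<bar> * \<bar>a R * b R\<bar>"
        by (simp add: a_def b_def abs_mult)
    qed simp
    also have "\<dots> \<le> L2_set N P * L2_set (\<lambda>R. a R * b R) P"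
      by (rule L2_set_mult_ineq)
    also have "L2_set N P = sqrt S"
      unfolding L2_set_def S_def N_def ..
    also have "L2_set (\<lambda>R. a R * b R) P = nu * nv"
    proof -
      define h where "h = (\<lambda>p. (cmod (u (fst p)))^2 * (cmod (v (snd p)))^2)"
      have "(\<Sum>R\<in>P. (a R * b R)^2) = (\<Sum>R\<in>P. \<Sum>p\<in>R. h p)"
      proof (rule sum.cong)
        fix R assume RP: "R \<in> P"
        have "(a R * b R)^2 = (\<Sum>x\<in>fst ` R. (cmod (u x))^2) * (\<Sum>y\<in>snd ` R. (cmod (v y))^2)"
          unfolding a_def b_def L2_set_def by (simp add: power_mult_distrib sum_nonneg)
        also have "\<dots> = (\<Sum>p\<in>fst ` R \<times> snd ` R. h p)"
          unfolding sum_product h_def by (simp add: sum.cartesian_product case_prod_beta)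
        also have "\<dots> = (\<Sum>p\<in>R. h p)" by (rule sum.cong[OF rect(1)[OF RP, symmetric]]) simp
        finally show "(a R * b R)^2 = (\<Sum>p\<in>R. h p)" .
      qed simp
      also have "\<dots> = (\<Sum>p\<in>\<Union>P. h p)"
        by (subst sum.Union_disjoint) (use finR disj in auto)
      also have "\<dots> = (\<Sum>p\<in>X \<times> Y. h p)" using UP by simp
      also have "\<dots> = (\<Sum>x\<in>X. (cmod (u x))^2) * (\<Sum>y\<in>Y. (cmod (v y))^2)"
        unfolding sum_product h_def by (simp add: sum.cartesian_product case_prod_beta)
      finally have "(\<Sum>R\<in>P. (a R * b R)^2) = nu^2 * nv^2"
        unfolding nu_def nv_def vec_norm2_def by (simp add: sum_nonneg)
      then show ?thesis unfolding L2_set_def using nu0 nv0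
        by (simp add: real_sqrt_mult power_mult_distrib[symmetric])
    qed
    finally have "nu^2 \<le> sqrt S * (nu * nv)" .
    also have "\<dots> \<le> sqrt S * nu"
      using v1 nu0 S0 unfolding nv_def[symmetric] by (intro mult_left_mono mult_left_le) auto
    finally have "nu * nu \<le> sqrt S * nu" by (simp add: power2_eq_square)
    then have "nu \<le> sqrt S" using nu0 S0
      by (cases "nu = 0") (auto simp: mult_le_cancel_right)
    then show ?thesis by (simp add: nu_def u_def)
  qed
  have "spec_norm X Y A \<le> sqrt S"
    unfolding spec_norm_def
    by (rule cSup_least) (use key in \<open>auto intro!: exI[of _ "\<lambda>_. 0"] simp: vec_norm2_def\<close>)
  then have "(spec_norm X Y A)^2 \<le> (sqrt S)^2"
    by (rule power_mono) (rule spec_nonneg[OF fX fY])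
  then show ?thesis using S0 by (simp add: S_def)
qed

end
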